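(* The pair $(\ell_2,\ell_2^2)$ fails the uniform sBPBp.
   Context: Scalars $\mathbb{K}=\mathbb{R}$ or $\mathbb{C}$; $\ell_2^2$ is $\mathbb{K}^2$ with the Euclidean norm; $S_X$ is the unit sphere of $X$, $\mathcal{L}(X,Y)$ the bounded linear operators. A pair of Banach spaces $(X,Y)$ has the uniform strong Bishop–Phelps–Bollobás property (uniform sBPBp) if for every $\varepsilon>0$ there exists $\eta(\varepsilon)>0$ such that whenever $T\in\mathcal{L}(X,Y)$ with $\|T\|=1$ and $x_0\in S_X$ satisfy $\|T(x_0)\|>1-\eta(\varepsilon)$, there exists $x_1\in S_X$ with $\|T(x_1)\|=1$ and $\|x_1-x_0\|<\varepsilon$. *)

theory Defs
  imports "HOL-Analysis.Analysis"
begin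

(* Scalars: 'a is instantiated to real or complex. *)

definition l2 :: "(nat \<Rightarrow> 'a::real_normed_field) set" where
  "l2 = {x. summable (\<lambda>n. (norm (x n))^2)}"

definition l2norm :: "(nat \<Rightarrow> 'a::real_normed_field) \<Rightarrow> real" where
  "l2norm x = sqrt (\<Sum>n. (norm (x n))^2)"

(* ell_2^2 = K^2 with the Euclidean norm *)
definition l22norm :: "'a::real_normed_field \<times> 'a \<Rightarrow> real" where
  "l22norm p = sqrt ((norm (fst p))^2 + (norm (snd p))^2)"

(* bounded (K-)linear operators ell_2 -> ell_2^2 (only values on l2 matter) *)
definition is_bounded_op :: "((nat \<Rightarrow> 'a::real_normed_field) \<Rightarrow> 'a \<times> 'a) \<Rightarrow> bool" where
  "is_bounded_op T \<longleftrightarrow>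
     (\<forall>x\<in>l2. \<forall>y\<in>l2. T (\<lambda>n. x n + y n) = T x + T y) \<and>
     (\<forall>c. \<forall>x\<in>l2. T (\<lambda>n. c * x n) = (c * fst (T x), c * snd (T x))) \<and>
     (\<exists>C. \<forall>x\<in>l2. l22norm (T x) \<le> C * l2norm x)"

definition op_norm :: "((nat \<Rightarrow> 'a::real_normed_field) \<Rightarrow> 'a \<times> 'a) \<Rightarrow> real" where
  "op_norm T = Sup {l22norm (T x) | x. x \<in> l2 \<and> l2norm x \<le> 1}"

definition uniform_sBPBp_l2_l22 :: "'a::real_normed_field itself \<Rightarrow> bool" where
  "uniform_sBPBp_l2_l22 _ \<longleftrightarrow>
    (\<forall>\<epsilon>>0. \<exists>\<eta>>0. \<forall>(T :: (nat \<Rightarrow> 'a) \<Rightarrow> 'a \<times> 'a) x0.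
       is_bounded_op T \<and> op_norm T = 1 \<and> x0 \<in> l2 \<and> l2norm x0 = 1 \<and>
       l22norm (T x0) > 1 - \<eta> \<longrightarrow>
       (\<exists>x1\<in>l2. l2norm x1 = 1 \<and> l22norm (T x1) = 1 \<and>
                  l2norm (\<lambda>n. x1 n - x0 n) < \<epsilon>))"

end

theory Submission
  imports Defs
begin

definition ee :: "nat \<Rightarrow> nat \<Rightarrow> 'a::real_normed_field" where
  "ee k = (\<lambda>n. if n = k then 1 else 0)"

lemma ee_sums: "(\<lambda>n. (norm (ee k n :: 'a::real_normed_field))^2) sums 1"
proof -
  have "(\<lambda>n. (norm (ee k n :: 'a))^2) = (\<lambda>n. if n = k then 1 else 0)"
    by (auto simp: ee_def)
  moreover have "(\<lambda>n::nat. if n = k then (1::real) else 0) sums 1"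
    using sums_single[of k "\<lambda>_. 1::real"] by simp
  ultimately show ?thesis by simp
qed

lemma ee_l2: "(ee k :: nat \<Rightarrow> 'a::real_normed_field) \<in> l2" "l2norm (ee k :: nat \<Rightarrow> 'a) = 1"
  using ee_sums[of k, where 'a='a] unfolding l2_def l2norm_def
  by (auto simp: sums_iff)

lemma two_le:
  assumes "x \<in> l2"
  shows "(norm (x 0))^2 + (norm (x 1))^2 \<le> (\<Sum>n. (norm (x n :: 'a::real_normed_field))^2)"
proof -
  have "sum (\<lambda>n. (norm (x n))^2) {0,1} \<le> (\<Sum>n. (norm (x n))^2)"
    by (rule sum_le_suminf) (use assms in \<open>auto simp: l2_def\<close>)
  then show ?thesis by simp
qed

lemma one_le:
  assumes "summable (\<lambda>n. (norm (x n :: 'a::real_normed_field))^2)"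
  shows "(norm (x k))^2 \<le> (\<Sum>n. (norm (x n))^2)"
proof -
  have "sum (\<lambda>n. (norm (x n))^2) {k} \<le> (\<Sum>n. (norm (x n))^2)"
    by (rule sum_le_suminf) (use assms in auto)
  then show ?thesis by simp
qed

lemma generic: "\<not> uniform_sBPBp_l2_l22 TYPE('a::real_normed_field)"
proof
  assume H: "uniform_sBPBp_l2_l22 TYPE('a)"
  then obtain \<eta> where eta: "\<eta> > 0" and P: "\<forall>(T :: (nat \<Rightarrow> 'a) \<Rightarrow> 'a \<times> 'a) x0.
       is_bounded_op T \<and> op_norm T = 1 \<and> x0 \<in> l2 \<and> l2norm x0 = 1 \<and>
       l22norm (T x0) > 1 - \<eta> \<longrightarrow>
       (\<exists>x1\<in>l2. l2norm x1 = 1 \<and> l22norm (T x1) = 1 \<and>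
                  l2norm (\<lambda>n. x1 n - x0 n) < 1)"
    unfolding uniform_sBPBp_l2_l22_def by (meson zero_less_one)
  define c where "c = 1 - min (\<eta>/2) (1/2)"
  have c0: "0 \<le> c" "c < 1" "c > 1 - \<eta>" using eta by (auto simp: c_def)
  define T :: "(nat \<Rightarrow> 'a) \<Rightarrow> 'a \<times> 'a" where "T = (\<lambda>x. (x 0, of_real c * x 1))"
  have TN: "l22norm (T x) = sqrt ((norm (x 0))^2 + c^2 * (norm (x 1))^2)" for x
    using c0 by (simp add: T_def l22norm_def norm_mult power_mult_distrib)
  have bnd: "l22norm (T x) \<le> l2norm x" if "x \<in> l2" for x
  proof -
    have "c^2 * (norm (x 1))^2 \<le> (norm (x 1))^2"
      using c0 by (intro mult_left_le_one_le) (auto simp: power_le_one)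
    with two_le[OF that] show ?thesis unfolding TN l2norm_def
      by (intro real_sqrt_le_mono) linarith
  qed
  have bo: "is_bounded_op T"
    unfolding is_bounded_op_def
  proof (intro conjI ballI allI)
    show "\<exists>C. \<forall>x\<in>l2. l22norm (T x) \<le> C * l2norm x"
      by (rule exI[of _ 1]) (use bnd in auto)
  qed (auto simp: T_def algebra_simps)
  have on: "op_norm T = 1"
    unfolding op_norm_def
  proof (rule cSup_eq_maximum)
    have "l22norm (T (ee 0)) = 1" by (simp add: TN ee_def)
    then show "1 \<in> {l22norm (T x) |x. x \<in> l2 \<and> l2norm x \<le> 1}"
      using ee_l2[of 0, where 'a='a] by force
    show "\<And>a. a \<in> {l22norm (T x) |x. x \<in> l2 \<and> l2norm x \<le> 1} \<Longrightarrow> a \<le> 1"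
      using bnd by force
  qed
  have "l22norm (T (ee 1)) = c" using c0 by (simp add: TN ee_def)
  with P[rule_format, of T "ee 1"] bo on ee_l2[of 1, where 'a='a] c0
  obtain x1 where x1: "x1 \<in> l2" "l2norm x1 = 1" "l22norm (T x1) = 1"
    "l2norm (\<lambda>n. x1 n - ee 1 n) < 1" by auto
  have S: "(\<Sum>n. (norm (x1 n))^2) = 1"
    using x1(2) unfolding l2norm_def
    by (metis real_sqrt_eq_1_iff)
  have Q: "(norm (x1 0))^2 + c^2 * (norm (x1 1))^2 = 1"
    using x1(3) unfolding TN by (metis real_sqrt_eq_1_iff)
  have "(1 - c^2) * (norm (x1 1))^2 \<le> 0"
    using two_le[OF x1(1)] S Q by (simp add: algebra_simps)
  moreover have "1 - c^2 > 0" using c0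
  proof -
    have "c^2 < 1" using c0 by (simp add: power_less_one_iff abs_square_less_1)
    then show ?thesis by simp
  qed
  ultimately have "(norm (x1 1))^2 \<le> 0"
    by (simp add: mult_le_0_iff)
  then have x11: "x1 1 = 0" by simp
  have sm: "summable (\<lambda>n. (norm (x1 n - ee 1 n :: 'a))^2)"
  proof -
    have "summable (\<lambda>n. (norm (x1 (n+2)))^2)"
      using summable_ignore_initial_segment[of "\<lambda>n. (norm (x1 n))^2" 2] x1(1) unfolding l2_def by simp
    moreover have "(\<lambda>n. (norm (x1 (n+2) - ee 1 (n+2) :: 'a))^2) = (\<lambda>n. (norm (x1 (n+2)))^2)"
      by (auto simp: ee_def)
    ultimately show ?thesis
      using summable_iff_shift[of "\<lambda>n. (norm (x1 n - ee 1 n :: 'a))^2" 2] by simp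
  qed
  have "(norm (x1 1 - ee 1 1 :: 'a))^2 \<le> (\<Sum>n. (norm (x1 n - ee 1 n))^2)"
    by (rule one_le[OF sm])
  then have "1 \<le> (\<Sum>n. (norm (x1 n - ee 1 n :: 'a))^2)"
    using x11 by (simp add: ee_def)
  then have "1 \<le> l2norm (\<lambda>n. x1 n - ee 1 n)"
    unfolding l2norm_def by simp
  with x1(4) show False by simp
qed

theorem mainTheorem16:
  shows "\<not> uniform_sBPBp_l2_l22 TYPE(real) \<and> \<not> uniform_sBPBp_l2_l22 TYPE(complex)"
  using generic[where 'a=real] generic[where 'a=complex] by blast

end
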